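(* Let $\mathcal{V}$ be a variety of $\Omega$-algebras with equational base $\Sigma$, and let $\mathcal{W}$ be the variety defined by $\Sigma^p$. Then for any set $X$, the free $\mathcal{W}$-algebra $A=X\mathcal{W}$ is a semilattice sum of $\mathcal{V}$-algebras: $A=\bigsqcup_{s\in S}A_s$, where $S=A/\varrho\cong X\mathcal{S}$ is the free semilattice over $X$ ($\varrho$ the semilattice replica congruence of $A$) and every $\varrho$-class $A_s$ belongs to $\mathcal{V}$. In particular (taking $\Sigma=\mathrm{Id}(\mathcal{V})$), $X\mathcal{V}^p\in\mathcal{V}\circ\mathcal{S}$.
   Context: Standing conventions: $\Omega$-algebras are of a plural similarity type (no nullary operation symbols, at least one operation symbol of arity $\ge2$). $T_n$ is the set of $\Omega$-terms in $x_1,\dots,x_n$ in which all $n$ variables occur. An identity is regular if the same variables occur on both sides. $\mathcal{S}$ is the variety of $\Omega$-algebras satisfying all regular identities; $X\mathcal{S}$ is the free $\mathcal{S}$-algebra over $X$. $\mathcal{V}\circ\mathcal{S}$ is the class of $\Omega$-algebras $A$ having a congruence $\theta$ with $A/\theta\in\mathcal{S}$ and every $\theta$-class (a subalgebra) in $\mathcal{V}$. The semilattice replica congruence of $A$ is the smallest congruence $\varrho$ with $A/\varrho\in\mathcal{S}$. Prolongation: for an identity $\sigma$ of the form $u(y_1,\dots,y_n)=v(y_1,\dots,y_n)$ and $m\ge1$, $\sigma^p_m$ is the set of identities $u(r_1,\dots,r_n)=v(r_1,\dots,r_n)$ obtained by substituting $r_i(x_1,\dots,x_m)$ for $y_i$,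 with $r_i$ ranging over $T_m$; $\sigma^p=\bigcup_m\sigma^p_m$; $\Sigma^p=\bigcup_{\sigma\in\Sigma}\sigma^p$. $\mathcal{V}^p$ is the variety defined by $\mathrm{Id}(\mathcal{V})^p$, where $\mathrm{Id}(\mathcal{V})$ is the set of all identities holding in $\mathcal{V}$. *)

theory Defs
  imports Main
begin

text \<open>A similarity type is given by an arity function ar on operation symbols of type 'o.\<close>

datatype ('o, 'v) trm = Var 'v | App 'o "('o, 'v) trm list"

definition plural :: "('o \<Rightarrow> nat) \<Rightarrow> bool" where
  "plural ar \<longleftrightarrow> (\<forall>f. ar f \<ge> 1) \<and> (\<exists>f. ar f \<ge> 2)"

fun wf_trm :: "('o \<Rightarrow> nat) \<Rightarrow> ('o, 'v) trm \<Rightarrow> bool" where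
  "wf_trm ar (Var v) = True"
| "wf_trm ar (App f ts) = (length ts = ar f \<and> (\<forall>t\<in>set ts. wf_trm ar t))"

primrec vars :: "('o, 'v) trm \<Rightarrow> 'v set" where
  "vars (Var v) = {v}"
| "vars (App f ts) = \<Union> (set (map vars ts))"

primrec eval :: "('o \<Rightarrow> 'a list \<Rightarrow> 'a) \<Rightarrow> ('v \<Rightarrow> 'a) \<Rightarrow> ('o, 'v) trm \<Rightarrow> 'a" where
  "eval F \<sigma> (Var v) = \<sigma> v"
| "eval F \<sigma> (App f ts) = F f (map (eval F \<sigma>) ts)"

definition subst :: "('v \<Rightarrow> ('o, 'w) trm) \<Rightarrow> ('o, 'v) trm \<Rightarrow> ('o, 'w) trm" where
  "subst r t = eval App r t"

type_synonym 'o ident = "('o, nat) trm \<times> ('o, nat) trm"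

definition closed :: "('o \<Rightarrow> nat) \<Rightarrow> 'a set \<Rightarrow> ('o \<Rightarrow> 'a list \<Rightarrow> 'a) \<Rightarrow> bool" where
  "closed ar A F \<longleftrightarrow> (\<forall>f xs. length xs = ar f \<and> set xs \<subseteq> A \<longrightarrow> F f xs \<in> A)"

definition satisfies :: "'a set \<Rightarrow> ('o \<Rightarrow> 'a list \<Rightarrow> 'a) \<Rightarrow> 'o ident \<Rightarrow> bool" where
  "satisfies A F e \<longleftrightarrow> (\<forall>\<sigma>. (\<forall>v. \<sigma> v \<in> A) \<longrightarrow> eval F \<sigma> (fst e) = eval F \<sigma> (snd e))"

definition models :: "'o ident set \<Rightarrow> 'a set \<Rightarrow> ('o \<Rightarrow> 'a list \<Rightarrow> 'a) \<Rightarrow> bool" where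
  "models E A F \<longleftrightarrow> (\<forall>e\<in>E. satisfies A F e)"

definition congruence :: "('o \<Rightarrow> nat) \<Rightarrow> 'a set \<Rightarrow> ('o \<Rightarrow> 'a list \<Rightarrow> 'a) \<Rightarrow> 'a rel \<Rightarrow> bool" where
  "congruence ar A F \<theta> \<longleftrightarrow> equiv A \<theta> \<and>
     (\<forall>f xs ys. length xs = ar f \<and> list_all2 (\<lambda>x y. (x, y) \<in> \<theta>) xs ys
        \<longrightarrow> (F f xs, F f ys) \<in> \<theta>)"

definition quot_op :: "'a rel \<Rightarrow> ('o \<Rightarrow> 'a list \<Rightarrow> 'a) \<Rightarrow> 'o \<Rightarrow> 'a set list \<Rightarrow> 'a set" where
  "quot_op \<theta> F f Cs = \<theta> `` {F f (map (\<lambda>C. SOME a. a \<in> C) Cs)}"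

definition iso :: "('o \<Rightarrow> nat) \<Rightarrow> 'a set \<Rightarrow> ('o \<Rightarrow> 'a list \<Rightarrow> 'a) \<Rightarrow> 'b set \<Rightarrow> ('o \<Rightarrow> 'b list \<Rightarrow> 'b)
    \<Rightarrow> ('a \<Rightarrow> 'b) \<Rightarrow> bool" where
  "iso ar A F B G h \<longleftrightarrow> bij_betw h A B \<and>
     (\<forall>f xs. length xs = ar f \<and> set xs \<subseteq> A \<longrightarrow> h (F f xs) = G f (map h xs))"

definition regular_ids :: "('o \<Rightarrow> nat) \<Rightarrow> 'o ident set" where
  "regular_ids ar = {(s, t). wf_trm ar s \<and> wf_trm ar t \<and> vars s = vars t}"

definition in_S :: "('o \<Rightarrow> nat) \<Rightarrow> 'a set \<Rightarrow> ('o \<Rightarrow> 'a list \<Rightarrow> 'a) \<Rightarrow> bool" where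
  "in_S ar A F \<longleftrightarrow> closed ar A F \<and> models (regular_ids ar) A F"

definition sl_replica :: "('o \<Rightarrow> nat) \<Rightarrow> 'a set \<Rightarrow> ('o \<Rightarrow> 'a list \<Rightarrow> 'a) \<Rightarrow> 'a rel \<Rightarrow> bool" where
  "sl_replica ar A F \<rho> \<longleftrightarrow> congruence ar A F \<rho> \<and> in_S ar (A // \<rho>) (quot_op \<rho> F) \<and>
     (\<forall>\<theta>. congruence ar A F \<theta> \<and> in_S ar (A // \<theta>) (quot_op \<theta> F) \<longrightarrow> \<rho> \<subseteq> \<theta>)"

definition in_Var :: "('o \<Rightarrow> nat) \<Rightarrow> 'o ident set \<Rightarrow> 'a set \<Rightarrow> ('o \<Rightarrow> 'a list \<Rightarrow> 'a) \<Rightarrow> bool" where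
  "in_Var ar E A F \<longleftrightarrow> closed ar A F \<and> models E A F"

definition in_V_circ_S :: "('o \<Rightarrow> nat) \<Rightarrow> 'o ident set \<Rightarrow> 'a set \<Rightarrow> ('o \<Rightarrow> 'a list \<Rightarrow> 'a) \<Rightarrow> bool" where
  "in_V_circ_S ar E A F \<longleftrightarrow> (\<exists>\<theta>. congruence ar A F \<theta> \<and> in_S ar (A // \<theta>) (quot_op \<theta> F) \<and>
      (\<forall>C\<in>A // \<theta>. in_Var ar E C F))"

definition T_m :: "('o \<Rightarrow> nat) \<Rightarrow> nat \<Rightarrow> ('o, nat) trm set" where
  "T_m ar m = {t. wf_trm ar t \<and> vars t = {1..m}}"

definition prolong :: "('o \<Rightarrow> nat) \<Rightarrow> 'o ident set \<Rightarrow> 'o ident set" where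
  "prolong ar E = {(subst r u, subst r v) | u v r m. (u, v) \<in> E \<and> m \<ge> 1 \<and>
      (\<forall>y \<in> vars u \<union> vars v. r y \<in> T_m ar m)}"

definition terms_over :: "('o \<Rightarrow> nat) \<Rightarrow> 'x set \<Rightarrow> ('o, 'x) trm set" where
  "terms_over ar X = {t. wf_trm ar t \<and> vars t \<subseteq> X}"

inductive deriv :: "('o \<Rightarrow> nat) \<Rightarrow> 'o ident set \<Rightarrow> 'x set \<Rightarrow> ('o, 'x) trm \<Rightarrow> ('o, 'x) trm \<Rightarrow> bool"
  for ar E X where
  ax: "(s, t) \<in> E \<Longrightarrow> (\<forall>v \<in> vars s \<union> vars t. r v \<in> terms_over ar X)
        \<Longrightarrow> deriv ar E X (subst r s) (subst r t)"
| refl: "t \<in> terms_over ar X \<Longrightarrow> deriv ar E X t t"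
| sym: "deriv ar E X s t \<Longrightarrow> deriv ar E X t s"
| trans: "deriv ar E X s t \<Longrightarrow> deriv ar E X t u \<Longrightarrow> deriv ar E X s u"
| cong: "length ts = ar f \<Longrightarrow> list_all2 (deriv ar E X) ts us \<Longrightarrow> deriv ar E X (App f ts) (App f us)"

definition free_rel :: "('o \<Rightarrow> nat) \<Rightarrow> 'o ident set \<Rightarrow> 'x set \<Rightarrow> ('o, 'x) trm rel" where
  "free_rel ar E X = {(s, t). deriv ar E X s t}"

definition free_carrier :: "('o \<Rightarrow> nat) \<Rightarrow> 'o ident set \<Rightarrow> 'x set \<Rightarrow> ('o, 'x) trm set set" where
  "free_carrier ar E X = terms_over ar X // free_rel ar E X"

definition free_op :: "('o \<Rightarrow> nat) \<Rightarrow> 'o ident set \<Rightarrow> 'x set \<Rightarrow> 'o \<Rightarrow> ('o, 'x) trm set list \<Rightarrow> ('o, 'x) trm set" where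
  "free_op ar E X = quot_op (free_rel ar E X) App"

end

theory Submission
  imports Defs
begin



lemma subst_eq: "subst r = eval App r"
  by (rule ext) (simp add: subst_def)

lemma subst_Var_simp[simp]: "subst r (Var v) = r v"
  by (simp add: subst_eq)

lemma subst_App_simp[simp]: "subst r (App f ts) = App f (map (subst r) ts)"
  by (simp add: subst_eq)

lemma vars_subst: "vars (subst r t) = (\<Union>v\<in>vars t. vars (r v))"
  by (induction t) auto

lemma wf_subst: "wf_trm ar t \<Longrightarrow> (\<forall>v\<in>vars t. wf_trm ar (r v)) \<Longrightarrow> wf_trm ar (subst r t)"
  by (induction t) auto

lemma subst_cong: "(\<forall>v\<in>vars t. r v = r' v) \<Longrightarrow> subst r t = subst r' t"
  by (induction t) auto

lemma subst_Var: "subst Var t = t"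
  by (induction t) (auto simp: map_idI)

lemma subst_subst: "subst a (subst b t) = subst (\<lambda>v. subst a (b v)) t"
  by (induction t) auto

lemma vars_finite: "finite (vars t)"
  by (induction t) auto

lemma vars_nonempty: "plural ar \<Longrightarrow> wf_trm ar t \<Longrightarrow> vars t \<noteq> {}"
proof (induction t)
  case (Var x)
  then show ?case by simp
next
  case (App f ts)
  then have "ar f \<ge> 1" by (auto simp: plural_def)
  with App have "ts \<noteq> []" by auto
  then obtain t where "t \<in> set ts" by (cases ts) auto
  with App show ?case by auto
qed

lemma quot_rep: "equiv A \<theta> \<Longrightarrow> K \<in> A // \<theta> \<Longrightarrow> a \<in> K \<Longrightarrow> K = \<theta> `` {a}"
  by (metis equiv_class_eq_iff equiv_class_self quotientE Image_singleton_iff)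

lemma quot_some: "equiv A \<theta> \<Longrightarrow> K \<in> A // \<theta> \<Longrightarrow> (SOME a. a \<in> K) \<in> K \<and> (SOME a. a \<in> K) \<in> A \<and> K = \<theta> `` {SOME a. a \<in> K}"
proof -
  assume e: "equiv A \<theta>" and k: "K \<in> A // \<theta>"
  then have "K \<noteq> {}" by (rule in_quotient_imp_non_empty)
  then have s: "(SOME a. a \<in> K) \<in> K" by (simp add: some_in_eq)
  moreover have "K \<subseteq> A" using e k by (rule in_quotient_imp_subset)
  ultimately show ?thesis using quot_rep[OF e k s] by auto
qed

lemma quot_op_class:
  assumes c: "congruence ar A F \<theta>" and l: "length xs = ar f" and s: "set xs \<subseteq> A"
  shows "quot_op \<theta> F f (map (\<lambda>x. \<theta> `` {x}) xs) = \<theta> `` {F f xs}"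
proof -
  have e: "equiv A \<theta>" using c by (simp add: congruence_def)
  let ?ys = "map (\<lambda>x. SOME a. a \<in> \<theta> `` {x}) xs"
  have "list_all2 (\<lambda>x y. (x, y) \<in> \<theta>) xs ?ys"
  proof (rule list_all2_all_nthI)
    fix n assume n: "n < length xs"
    then have "xs ! n \<in> A" using s by auto
    then have "xs ! n \<in> \<theta> `` {xs ! n}" using e by (intro equiv_class_self)
    then have "(SOME a. a \<in> \<theta> `` {xs ! n}) \<in> \<theta> `` {xs ! n}" by (rule someI)
    then show "(xs ! n, ?ys ! n) \<in> \<theta>" using n by simp
  qed simp
  then have "(F f xs, F f ?ys) \<in> \<theta>" using c l by (simp add: congruence_def)
  then have "\<theta> `` {F f ?ys} = \<theta> `` {F f xs}" using e by (metis equiv_class_eq_iff)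
  then show ?thesis by (simp add: quot_op_def comp_def)
qed

lemma quot_closed:
  assumes cl: "closed ar A F" and c: "congruence ar A F \<theta>"
  shows "closed ar (A // \<theta>) (quot_op \<theta> F)"
  unfolding closed_def
proof (intro allI impI)
  fix f Cs assume a: "length Cs = ar f \<and> set Cs \<subseteq> A // \<theta>"
  have e: "equiv A \<theta>" using c by (simp add: congruence_def)
  have "set (map (\<lambda>C. SOME a. a \<in> C) Cs) \<subseteq> A" using a quot_some[OF e] by auto
  then have "F f (map (\<lambda>C. SOME a. a \<in> C) Cs) \<in> A" using cl a by (simp add: closed_def)
  then show "quot_op \<theta> F f Cs \<in> A // \<theta>" by (simp add: quot_op_def quotientI)
qed

lemma eval_closed: "closed ar A F \<Longrightarrow> wf_trm ar t \<Longrightarrow> \<forall>v\<in>vars t. \<sigma> v \<in> A \<Longrightarrow> eval F \<sigma> t \<in> A"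
proof (induction t)
  case (Var x) then show ?case by simp
next
  case (App f ts)
  then have "set (map (eval F \<sigma>) ts) \<subseteq> A" by auto
  then show ?case using App.prems(1,2) by (simp add: closed_def)
qed

lemma eval_quot:
  assumes cl: "closed ar A F" and c: "congruence ar A F \<theta>"
  shows "wf_trm ar t \<Longrightarrow> \<forall>v\<in>vars t. \<sigma> v \<in> A \<Longrightarrow>
     eval (quot_op \<theta> F) (\<lambda>v. \<theta> `` {\<sigma> v}) t = \<theta> `` {eval F \<sigma> t}"
proof (induction t)
  case (Var x) then show ?case by simp
next
  case (App f ts)
  have m: "map (eval (quot_op \<theta> F) (\<lambda>v. \<theta> `` {\<sigma> v})) ts = map (\<lambda>x. \<theta> `` {x}) (map (eval F \<sigma>) ts)"
    using App by auto
  have s: "set (map (eval F \<sigma>) ts) \<subseteq> A"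
  proof
    fix y assume "y \<in> set (map (eval F \<sigma>) ts)"
    then obtain t where "t \<in> set ts" "y = eval F \<sigma> t" by auto
    then show "y \<in> A" using App.prems eval_closed[OF cl, of t \<sigma>] by auto
  qed
  have "quot_op \<theta> F f (map (\<lambda>x. \<theta> `` {x}) (map (eval F \<sigma>) ts)) = \<theta> `` {F f (map (eval F \<sigma>) ts)}"
    by (rule quot_op_class[OF c]) (use App.prems s in auto)
  then show ?case by (simp only: eval.simps m)
qed




definition regset :: "('o \<Rightarrow> nat) \<Rightarrow> 'o ident set \<Rightarrow> bool" where
  "regset ar E \<longleftrightarrow> (\<forall>(a, b)\<in>E. wf_trm ar a \<and> wf_trm ar b \<and> vars a = vars b)"

lemma deriv_props:
  assumes R: "regset ar E"
  shows "deriv ar E X s t \<Longrightarrow> s \<in> terms_over ar X \<and> t \<in> terms_over ar X \<and> vars s = vars t"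
proof (induction rule: deriv.induct)
  case (ax s t r)
  then have "wf_trm ar s" "wf_trm ar t" "vars s = vars t" using R by (auto simp: regset_def)
  then show ?case using ax
    by (auto simp: terms_over_def vars_subst intro!: wf_subst)
next
  case (refl t) then show ?case by simp
next
  case (sym s t) then show ?case by simp
next
  case (trans s t u) then show ?case by simp
next
  case (cong ts f us)
  have l: "length us = length ts" using cong(2) by (simp add: list_all2_lengthD)
  have "\<forall>i<length ts. ts ! i \<in> terms_over ar X \<and> us ! i \<in> terms_over ar X \<and> vars (ts ! i) = vars (us ! i)"
    using cong(2) by (simp add: list_all2_conv_all_nth)
  then have a: "\<forall>t\<in>set ts. t \<in> terms_over ar X" "\<forall>t\<in>set us. t \<in> terms_over ar X"
     "map vars ts = map vars us"
    using l by (auto simp: in_set_conv_nth intro: nth_equalityI)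
  have "vars (App f ts) = vars (App f us)" using a(3) by simp
  then show ?case using a cong(1) l by (auto simp: terms_over_def)
qed

lemma free_cong:
  assumes R: "regset ar E"
  shows "congruence ar (terms_over ar X) App (free_rel ar E X)"
  unfolding congruence_def
proof (intro conjI allI impI)
  show "equiv (terms_over ar X) (free_rel ar E X)"
    unfolding equiv_def refl_on_def sym_def trans_def free_rel_def
    using deriv_props[OF R] by (auto intro: deriv.intros)
next
  fix f xs ys assume "length xs = ar f \<and> list_all2 (\<lambda>x y. (x, y) \<in> free_rel ar E X) xs ys"
  then show "(App f xs, App f ys) \<in> free_rel ar E X"
    by (auto simp: free_rel_def intro: deriv.cong)
qed

lemma free_closed: "closed ar (terms_over ar X) App"
  by (auto simp: closed_def terms_over_def)

lemma eval_free:
  assumes R: "regset ar E" and w: "wf_trm ar t" and r: "\<forall>v\<in>vars t. r v \<in> terms_over ar X"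
  shows "eval (free_op ar E X) (\<lambda>v. free_rel ar E X `` {r v}) t = free_rel ar E X `` {subst r t}"
  unfolding free_op_def subst_def
  by (rule eval_quot[OF free_closed free_cong[OF R] w r])

lemma rename:
  assumes s: "s \<in> terms_over ar X" and t: "t \<in> terms_over ar X"
  shows "\<exists>s' t' (r :: nat \<Rightarrow> ('a, 'b) trm). wf_trm ar s' \<and> wf_trm ar t' \<and> (vars s = vars t \<longrightarrow> vars s' = vars t') \<and>
     subst r s' = s \<and> subst r t' = t \<and> (\<forall>n. r n \<in> terms_over ar X)"
proof -
  let ?V = "vars s \<union> vars t"
  have "finite ?V" by (simp add: vars_finite)
  then obtain g :: "'b \<Rightarrow> nat" and n where g: "inj_on g ?V"
    using finite_imp_inj_to_nat_seg by blast
  define r where "r = (\<lambda>n. if n \<in> g ` ?V then Var (inv_into ?V g n) else s)"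
  have VX: "?V \<subseteq> X" using s t by (auto simp: terms_over_def)
  have rT: "\<forall>n. r n \<in> terms_over ar X"
    using s VX g by (auto simp: r_def terms_over_def inv_into_f_f)
  have bk: "subst r (subst (Var \<circ> g) u) = u" if "vars u \<subseteq> ?V" for u
  proof -
    have "subst r (subst (Var \<circ> g) u) = subst (\<lambda>v. r (g v)) u" by (simp add: subst_subst)
    also have "\<dots> = subst Var u"
    proof (rule subst_cong)
      show "\<forall>v\<in>vars u. r (g v) = Var v" using that g by (auto simp: r_def inv_into_f_f subset_iff)
    qed
    finally show ?thesis by (simp add: subst_Var)
  qed
  show ?thesis
    apply (rule exI[of _ "subst (Var \<circ> g) s"], rule exI[of _ "subst (Var \<circ> g) t"], rule exI[of _ r])
    using s t rT bk by (auto simp: terms_over_def vars_subst intro!: wf_subst)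
qed

lemma reg_regset: "regset ar (regular_ids ar)"
  by (auto simp: regset_def regular_ids_def)

lemma reg_deriv:
  assumes s: "s \<in> terms_over ar X" and t: "t \<in> terms_over ar X" and v: "vars s = vars t"
  shows "deriv ar (regular_ids ar) X s t"
proof -
  obtain s' t' :: "(_, nat) trm" and r where a: "wf_trm ar s'" "wf_trm ar t'" "vars s' = vars t'"
    "subst r s' = s" "subst r t' = t" "\<forall>n. r n \<in> terms_over ar X"
    using rename[OF s t] v by metis
  have "(s', t') \<in> regular_ids ar" using a by (simp add: regular_ids_def)
  then have "deriv ar (regular_ids ar) X (subst r s') (subst r t')"
    by (rule deriv.ax) (use a in auto)
  then show ?thesis using a by simp
qed

lemma reg_class:
  assumes s: "s \<in> terms_over ar X"
  shows "free_rel ar (regular_ids ar) X `` {s} = {t \<in> terms_over ar X. vars t = vars s}"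
  using deriv_props[OF reg_regset] reg_deriv[OF s] by (auto simp: free_rel_def)

lemma prolong_regset:
  assumes p: "plural ar" and S: "\<forall>(u, v) \<in> \<Sigma>. wf_trm ar u \<and> wf_trm ar v"
  shows "regset ar (prolong ar \<Sigma>)"
  unfolding regset_def prolong_def
proof (clarify)
  fix u v r m assume uv: "(u, v) \<in> \<Sigma>" and m: "1 \<le> m" and r: "\<forall>y\<in>vars u \<union> vars v. r y \<in> T_m ar m"
  have w: "wf_trm ar u" "wf_trm ar v" using uv S by auto
  have ne: "vars u \<noteq> {}" "vars v \<noteq> {}" using vars_nonempty[OF p] w by auto
  have "vars (subst r u) = {1..m}" using r ne by (auto simp: vars_subst T_m_def)
  moreover have "vars (subst r v) = {1..m}" using r ne by (auto simp: vars_subst T_m_def)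
  ultimately show "wf_trm ar (subst r u) \<and> wf_trm ar (subst r v) \<and> vars (subst r u) = vars (subst r v)"
    using w r by (auto intro!: wf_subst simp: T_m_def)
qed




definition cvars :: "('o, 'x) trm set \<Rightarrow> 'x set" where
  "cvars C = vars (SOME t. t \<in> C)"

definition rho :: "('o \<Rightarrow> nat) \<Rightarrow> 'o ident set \<Rightarrow> 'x set \<Rightarrow> ('o, 'x) trm set rel" where
  "rho ar E X = {(C, D). C \<in> free_carrier ar E X \<and> D \<in> free_carrier ar E X \<and> cvars C = cvars D}"

context
  fixes ar :: "'o \<Rightarrow> nat" and E :: "'o ident set" and X :: "'x set"
  assumes R: "regset ar E"
begin

lemma eqFE: "equiv (terms_over ar X) (free_rel ar E X)"
  using free_cong[OF R, of X] by (simp add: congruence_def)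

lemma CV: "s \<in> terms_over ar X \<Longrightarrow> cvars (free_rel ar E X `` {s}) = vars s"
proof -
  assume s: "s \<in> terms_over ar X"
  have "s \<in> free_rel ar E X `` {s}" using eqFE s by (rule equiv_class_self)
  then have "(SOME t. t \<in> free_rel ar E X `` {s}) \<in> free_rel ar E X `` {s}" by (rule someI)
  then show ?thesis using deriv_props[OF R] by (auto simp: cvars_def free_rel_def)
qed

lemma Aclass: "C \<in> free_carrier ar E X \<Longrightarrow> (SOME t. t \<in> C) \<in> terms_over ar X \<and> C = free_rel ar E X `` {SOME t. t \<in> C}"
  using quot_some[OF eqFE] by (auto simp: free_carrier_def)

lemma Fop:
  assumes l: "length xs = ar f" and s: "set xs \<subseteq> free_carrier ar E X"
  shows "free_op ar E X f xs \<in> free_carrier ar E X \<and> cvars (free_op ar E X f xs) = \<Union>(cvars ` set xs)"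
proof -
  let ?ts = "map (\<lambda>C. SOME a. a \<in> C) xs"
  have ts: "set ?ts \<subseteq> terms_over ar X" using s Aclass by auto
  then have T: "App f ?ts \<in> terms_over ar X" using l by (auto simp: terms_over_def)
  have eq: "free_op ar E X f xs = free_rel ar E X `` {App f ?ts}"
    by (simp add: free_op_def quot_op_def)
  show ?thesis unfolding eq
    using T CV[OF T] by (auto simp: free_carrier_def quotientI cvars_def)
qed

lemma eval_cv:
  assumes r: "\<forall>v. rep v \<in> free_carrier ar E X"
  shows "wf_trm ar s \<Longrightarrow> eval (free_op ar E X) rep s \<in> free_carrier ar E X \<and>
     cvars (eval (free_op ar E X) rep s) = (\<Union>v\<in>vars s. cvars (rep v))"
proof (induction s)
  case (Var x) then show ?case using r by simp
next
  case (App f ts)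
  have s: "set (map (eval (free_op ar E X) rep) ts) \<subseteq> free_carrier ar E X" using App by auto
  have "cvars (eval (free_op ar E X) rep (App f ts)) = \<Union>(cvars ` set (map (eval (free_op ar E X) rep) ts))"
    using Fop[OF _ s] App.prems by simp
  also have "\<dots> = (\<Union>v\<in>vars (App f ts). cvars (rep v))" using App by auto
  finally show ?case using Fop[OF _ s] App.prems by simp
qed

lemma rho_equiv: "equiv (free_carrier ar E X) (rho ar E X)"
  unfolding equiv_def refl_on_def sym_def trans_def rho_def by auto

lemma rho_class: "C \<in> free_carrier ar E X \<Longrightarrow> rho ar E X `` {C} = {D \<in> free_carrier ar E X. cvars D = cvars C}"
  unfolding rho_def by auto

lemma free_closedA: "closed ar (free_carrier ar E X) (free_op ar E X)"
  unfolding free_carrier_def free_op_def by (rule quot_closed[OF free_closed free_cong[OF R]])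

lemma rho_cong: "congruence ar (free_carrier ar E X) (free_op ar E X) (rho ar E X)"
  unfolding congruence_def
proof (intro conjI allI impI)
  show "equiv (free_carrier ar E X) (rho ar E X)" by (rule rho_equiv)
next
  fix f xs ys assume a: "length xs = ar f \<and> list_all2 (\<lambda>x y. (x, y) \<in> rho ar E X) xs ys"
  have "list_all2 (\<lambda>x y. (x, y) \<in> rho ar E X) xs ys \<Longrightarrow>
     set xs \<subseteq> free_carrier ar E X \<and> set ys \<subseteq> free_carrier ar E X \<and> map cvars xs = map cvars ys"
    by (induction rule: list_all2_induct) (auto simp: rho_def)
  then have b: "set xs \<subseteq> free_carrier ar E X" "set ys \<subseteq> free_carrier ar E X" "map cvars xs = map cvars ys"
    using a by auto
  have l: "length ys = ar f" using a by (auto dest: list_all2_lengthD)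
  have "\<Union>(cvars ` set xs) = \<Union>(cvars ` set ys)" using b(3)
    by (metis set_map)
  then show "(free_op ar E X f xs, free_op ar E X f ys) \<in> rho ar E X"
    using Fop[OF _ b(1)] Fop[OF l b(2)] a by (auto simp: rho_def)
qed

lemma rho_S: "in_S ar (free_carrier ar E X // rho ar E X) (quot_op (rho ar E X) (free_op ar E X))"
  unfolding in_S_def
proof
  show "closed ar (free_carrier ar E X // rho ar E X) (quot_op (rho ar E X) (free_op ar E X))"
    by (rule quot_closed[OF free_closedA rho_cong])
next
  show "models (regular_ids ar) (free_carrier ar E X // rho ar E X) (quot_op (rho ar E X) (free_op ar E X))"
    unfolding models_def satisfies_def
  proof (clarify)
    fix s t and \<sigma> :: "nat \<Rightarrow> _"
    assume st: "(s, t) \<in> regular_ids ar" and \<sigma>: "\<forall>v. \<sigma> v \<in> free_carrier ar E X // rho ar E X"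
    define rep where "rep v = (SOME a. a \<in> \<sigma> v)" for v
    have rep: "\<forall>v. rep v \<in> free_carrier ar E X" and \<sigma>eq: "\<sigma> = (\<lambda>v. rho ar E X `` {rep v})"
      using quot_some[OF rho_equiv] \<sigma> by (auto simp: rep_def)
    have w: "wf_trm ar s" "wf_trm ar t" "vars s = vars t" using st by (auto simp: regular_ids_def)
    have "eval (quot_op (rho ar E X) (free_op ar E X)) \<sigma> s = rho ar E X `` {eval (free_op ar E X) rep s}"
      unfolding \<sigma>eq using eval_quot[OF free_closedA rho_cong w(1)] rep by simp
    moreover have "eval (quot_op (rho ar E X) (free_op ar E X)) \<sigma> t = rho ar E X `` {eval (free_op ar E X) rep t}"
      unfolding \<sigma>eq using eval_quot[OF free_closedA rho_cong w(2)] rep by simp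
    moreover have "(eval (free_op ar E X) rep s, eval (free_op ar E X) rep t) \<in> rho ar E X"
      using eval_cv[OF rep w(1)] eval_cv[OF rep w(2)] w(3) by (simp add: rho_def)
    ultimately show "eval (quot_op (rho ar E X) (free_op ar E X)) \<sigma> (fst (s, t)) =
        eval (quot_op (rho ar E X) (free_op ar E X)) \<sigma> (snd (s, t))"
      using rho_equiv by (simp add: equiv_class_eq_iff)
  qed
qed

lemma rho_min:
  assumes c: "congruence ar (free_carrier ar E X) (free_op ar E X) \<theta>"
    and S: "in_S ar (free_carrier ar E X // \<theta>) (quot_op \<theta> (free_op ar E X))"
  shows "rho ar E X \<subseteq> \<theta>"
proof (clarify)
  fix C D assume cd: "(C, D) \<in> rho ar E X"
  have e: "equiv (free_carrier ar E X) \<theta>" using c by (simp add: congruence_def)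
  define s where "s = (SOME t. t \<in> C)"
  define t where "t = (SOME u. u \<in> D)"
  have CD: "C \<in> free_carrier ar E X" "D \<in> free_carrier ar E X" "cvars C = cvars D" using cd by (auto simp: rho_def)
  have s: "s \<in> terms_over ar X" "C = free_rel ar E X `` {s}" using Aclass[OF CD(1)] by (auto simp: s_def)
  have t: "t \<in> terms_over ar X" "D = free_rel ar E X `` {t}" using Aclass[OF CD(2)] by (auto simp: t_def)
  have v: "vars s = vars t" using CD(3) by (simp add: cvars_def s_def t_def)
  obtain s' t' :: "(_, nat) trm" and r where a: "wf_trm ar s'" "wf_trm ar t'" "vars s' = vars t'"
    "subst r s' = s" "subst r t' = t" "\<forall>n. r n \<in> terms_over ar X"
    using rename[OF s(1) t(1)] v by metis
  have reg: "(s', t') \<in> regular_ids ar" using a by (simp add: regular_ids_def)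
  define \<sigma>0 where "\<sigma>0 n = free_rel ar E X `` {r n}" for n
  have \<sigma>0A: "\<forall>n. \<sigma>0 n \<in> free_carrier ar E X" using a(6) by (simp add: \<sigma>0_def free_carrier_def quotientI)
  have "\<forall>n. \<theta> `` {\<sigma>0 n} \<in> free_carrier ar E X // \<theta>" using \<sigma>0A by (simp add: quotientI)
  then have sat: "eval (quot_op \<theta> (free_op ar E X)) (\<lambda>n. \<theta> `` {\<sigma>0 n}) s' = eval (quot_op \<theta> (free_op ar E X)) (\<lambda>n. \<theta> `` {\<sigma>0 n}) t'"
    using S reg by (auto simp: in_S_def models_def satisfies_def)
  have H: "eval (quot_op \<theta> (free_op ar E X)) (\<lambda>n. \<theta> `` {\<sigma>0 n}) u = \<theta> `` {free_rel ar E X `` {subst r u}}"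
    if u: "wf_trm ar u" for u :: "('o, nat) trm"
  proof -
    have "eval (quot_op \<theta> (free_op ar E X)) (\<lambda>n. \<theta> `` {\<sigma>0 n}) u = \<theta> `` {eval (free_op ar E X) \<sigma>0 u}"
      using eval_quot[OF free_closedA c u] \<sigma>0A by simp
    also have "eval (free_op ar E X) \<sigma>0 u = free_rel ar E X `` {subst r u}"
      unfolding \<sigma>0_def using a(6) by (intro eval_free[OF R u]) simp
    finally show ?thesis .
  qed
  have "\<theta> `` {C} = \<theta> `` {D}" using sat H[OF a(1)] H[OF a(2)] a s t by simp
  then show "(C, D) \<in> \<theta>" using e CD by (simp add: eq_equiv_class_iff)
qed

end



context
  fixes ar :: "'o \<Rightarrow> nat" and E :: "'o ident set" and X :: "'x set"
  assumes R: "regset ar E"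
begin

lemma Kform: "K \<in> free_carrier ar E X // rho ar E X \<Longrightarrow>
   \<exists>s\<in>terms_over ar X. K = {D \<in> free_carrier ar E X. cvars D = vars s}"
proof -
  assume "K \<in> free_carrier ar E X // rho ar E X"
  then obtain C where C: "C \<in> free_carrier ar E X" "K = rho ar E X `` {C}" by (auto elim: quotientE)
  define s where "s = (SOME t. t \<in> C)"
  have "s \<in> terms_over ar X" "cvars C = vars s" using Aclass[OF R C(1)] by (auto simp: s_def cvars_def)
  then show ?thesis using rho_class[OF R C(1)] C(2) by auto
qed

lemma UK: "s \<in> terms_over ar X \<Longrightarrow>
   \<Union>{D \<in> free_carrier ar E X. cvars D = vars s} = {t \<in> terms_over ar X. vars t = vars s}"
proof (intro equalityI subsetI)
  fix t assume s: "s \<in> terms_over ar X" and "t \<in> \<Union>{D \<in> free_carrier ar E X. cvars D = vars s}"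
  then obtain D where D: "D \<in> free_carrier ar E X" "cvars D = vars s" "t \<in> D" by auto
  have "D \<subseteq> terms_over ar X" using D(1) in_quotient_imp_subset[OF eqFE[OF R]] by (auto simp: free_carrier_def)
  then have tT: "t \<in> terms_over ar X" using D by auto
  have "D = free_rel ar E X `` {t}" using quot_rep[OF eqFE[OF R]] D by (auto simp: free_carrier_def)
  then have "cvars D = vars t" using CV[OF R tT] by simp
  then show "t \<in> {t \<in> terms_over ar X. vars t = vars s}" using tT D by simp
next
  fix t assume s: "s \<in> terms_over ar X" and t: "t \<in> {t \<in> terms_over ar X. vars t = vars s}"
  then have tT: "t \<in> terms_over ar X" by simp
  have "free_rel ar E X `` {t} \<in> free_carrier ar E X" using tT by (simp add: free_carrier_def quotientI)
  moreover have "t \<in> free_rel ar E X `` {t}" using tT by (rule equiv_class_self[OF eqFE[OF R]])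
  moreover have "cvars (free_rel ar E X `` {t}) = vars s" using CV[OF R tT] t by simp
  ultimately show "t \<in> \<Union>{D \<in> free_carrier ar E X. cvars D = vars s}" by blast
qed

lemma iso_rho:
  "iso ar (free_carrier ar E X // rho ar E X) (quot_op (rho ar E X) (free_op ar E X))
      (free_carrier ar (regular_ids ar) X) (free_op ar (regular_ids ar) X) Union"
  unfolding iso_def
proof (intro conjI allI impI)
  show "bij_betw Union (free_carrier ar E X // rho ar E X) (free_carrier ar (regular_ids ar) X)"
    unfolding bij_betw_def
  proof (intro conjI)
    show "inj_on Union (free_carrier ar E X // rho ar E X)"
    proof (rule inj_onI)
      fix K1 K2 assume K1: "K1 \<in> free_carrier ar E X // rho ar E X" and K2: "K2 \<in> free_carrier ar E X // rho ar E X"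
        and eq: "\<Union>K1 = \<Union>K2"
      obtain s1 where s1: "s1 \<in> terms_over ar X" "K1 = {D \<in> free_carrier ar E X. cvars D = vars s1}" using Kform[OF K1] by blast
      obtain s2 where s2: "s2 \<in> terms_over ar X" "K2 = {D \<in> free_carrier ar E X. cvars D = vars s2}" using Kform[OF K2] by blast
      have "{t \<in> terms_over ar X. vars t = vars s1} = {t \<in> terms_over ar X. vars t = vars s2}"
        using eq UK[OF s1(1)] UK[OF s2(1)] s1(2) s2(2) by simp
      then have "vars s1 = vars s2" using s1(1) by blast
      then show "K1 = K2" using s1 s2 by simp
    qed
  next
    show "Union ` (free_carrier ar E X // rho ar E X) = free_carrier ar (regular_ids ar) X"
    proof (intro equalityI subsetI)
      fix B assume "B \<in> Union ` (free_carrier ar E X // rho ar E X)"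
      then obtain K where K: "K \<in> free_carrier ar E X // rho ar E X" "B = \<Union>K" by auto
      obtain s where s: "s \<in> terms_over ar X" "K = {D \<in> free_carrier ar E X. cvars D = vars s}" using Kform[OF K(1)] by blast
      have "B = free_rel ar (regular_ids ar) X `` {s}" using K(2) s UK[OF s(1)] reg_class[OF s(1)] by simp
      then show "B \<in> free_carrier ar (regular_ids ar) X" using s(1) by (simp add: free_carrier_def quotientI)
    next
      fix B assume "B \<in> free_carrier ar (regular_ids ar) X"
      then obtain s where s: "s \<in> terms_over ar X" "B = free_rel ar (regular_ids ar) X `` {s}"
        by (auto simp: free_carrier_def elim: quotientE)
      have C: "free_rel ar E X `` {s} \<in> free_carrier ar E X" using s(1) by (simp add: free_carrier_def quotientI)
      have K: "rho ar E X `` {free_rel ar E X `` {s}} = {D \<in> free_carrier ar E X. cvars D = vars s}"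
        using rho_class[OF R C] CV[OF R s(1)] by simp
      have "B = \<Union>(rho ar E X `` {free_rel ar E X `` {s}})" using K UK[OF s(1)] reg_class[OF s(1)] s(2) by simp
      moreover have "rho ar E X `` {free_rel ar E X `` {s}} \<in> free_carrier ar E X // rho ar E X"
        using C by (simp add: quotientI)
      ultimately show "B \<in> Union ` (free_carrier ar E X // rho ar E X)" by blast
    qed
  qed
next
  fix f Ks assume a: "length Ks = ar f \<and> set Ks \<subseteq> free_carrier ar E X // rho ar E X"
  have kv: "cvars (SOME C. C \<in> K) = vars (SOME t. t \<in> \<Union>K) \<and> (SOME C. C \<in> K) \<in> free_carrier ar E X
      \<and> (SOME t. t \<in> \<Union>K) \<in> terms_over ar X"
    if K: "K \<in> free_carrier ar E X // rho ar E X" for K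
  proof -
    obtain s where s: "s \<in> terms_over ar X" "K = {D \<in> free_carrier ar E X. cvars D = vars s}" using Kform[OF K] by blast
    have "(SOME C. C \<in> K) \<in> K" using quot_some[OF rho_equiv[OF R] K] by simp
    then have 1: "cvars (SOME C. C \<in> K) = vars s" "(SOME C. C \<in> K) \<in> free_carrier ar E X" using s by auto
    have U: "\<Union>K = {t \<in> terms_over ar X. vars t = vars s}" using UK[OF s(1)] s(2) by simp
    then have "s \<in> \<Union>K" using s(1) by simp
    then have "(SOME t. t \<in> \<Union>K) \<in> \<Union>K" by (rule someI)
    then show ?thesis using 1 U by simp
  qed
  let ?Cs = "map (\<lambda>C. SOME a. a \<in> C) Ks"
  let ?ts = "map (\<lambda>C. SOME a. a \<in> C) (map Union Ks)"
  have CsA: "set ?Cs \<subseteq> free_carrier ar E X" using kv a by auto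
  have lC: "length ?Cs = ar f" using a by simp
  obtain FA: "free_op ar E X f ?Cs \<in> free_carrier ar E X" and FC: "cvars (free_op ar E X f ?Cs) = \<Union>(cvars ` set ?Cs)"
    using Fop[OF R lC CsA] by blast
  have tsT: "set ?ts \<subseteq> terms_over ar X" using kv a by auto
  have AT: "App f ?ts \<in> terms_over ar X" using tsT a by (auto simp: terms_over_def)
  have vv: "\<Union>(cvars ` set ?Cs) = vars (App f ?ts)"
  proof -
    have "map cvars ?Cs = map vars ?ts" using kv a by auto
    then show ?thesis by (metis set_map vars.simps(2))
  qed
  define w where "w = (SOME t. t \<in> free_op ar E X f ?Cs)"
  have w: "w \<in> terms_over ar X" "free_op ar E X f ?Cs = free_rel ar E X `` {w}" using Aclass[OF R FA] by (auto simp: w_def)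
  have vw: "vars w = vars (App f ?ts)" using FC vv w CV[OF R w(1)] by simp
  have L: "quot_op (rho ar E X) (free_op ar E X) f Ks = {D \<in> free_carrier ar E X. cvars D = vars w}"
    unfolding quot_op_def using rho_class[OF R FA] FC CV[OF R w(1)] w by simp
  have "\<Union>(quot_op (rho ar E X) (free_op ar E X) f Ks) = {t \<in> terms_over ar X. vars t = vars (App f ?ts)}"
    using L UK[OF w(1)] vw by simp
  also have "\<dots> = free_op ar (regular_ids ar) X f (map Union Ks)"
    unfolding free_op_def quot_op_def using reg_class[OF AT] by simp
  finally show "\<Union>(quot_op (rho ar E X) (free_op ar E X) f Ks) = free_op ar (regular_ids ar) X f (map Union Ks)" .
qed

end



lemma classes_V:
  assumes p: "plural ar" and S: "\<forall>(u, v) \<in> \<Sigma>. wf_trm ar u \<and> wf_trm ar v"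
    and K: "K \<in> free_carrier ar (prolong ar \<Sigma>) X // rho ar (prolong ar \<Sigma>) X"
  shows "in_Var ar \<Sigma> K (free_op ar (prolong ar \<Sigma>) X)"
proof -
  let ?E = "prolong ar \<Sigma>"
  have R: "regset ar ?E" by (rule prolong_regset[OF p S])
  obtain s0 where s0: "s0 \<in> terms_over ar X" "K = {D \<in> free_carrier ar ?E X. cvars D = vars s0}"
    using Kform[OF R K] by blast
  define W where "W = vars s0"
  have Wf: "finite W" by (simp add: W_def vars_finite)
  have Wne: "W \<noteq> {}" using vars_nonempty[OF p] s0(1) by (auto simp: W_def terms_over_def)
  have WX: "W \<subseteq> X" using s0(1) by (auto simp: W_def terms_over_def)
  show ?thesis unfolding in_Var_def
  proof
    show "closed ar K (free_op ar ?E X)" unfolding closed_def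
    proof (intro allI impI)
      fix f xs assume a: "length xs = ar f \<and> set xs \<subseteq> K"
      then have ne: "xs \<noteq> []" using p by (metis list.size(3) not_one_le_zero plural_def)
      have "set xs \<subseteq> free_carrier ar ?E X" using a s0(2) by auto
      from Fop[OF R _ this] a have "free_op ar ?E X f xs \<in> free_carrier ar ?E X"
        "cvars (free_op ar ?E X f xs) = \<Union>(cvars ` set xs)" by auto
      moreover have "\<Union>(cvars ` set xs) = vars s0"
      proof -
        obtain x0 where "x0 \<in> set xs" using ne by (cases xs) auto
        moreover have "\<forall>x\<in>set xs. cvars x = vars s0" using a s0(2) by auto
        ultimately show ?thesis by auto
      qed
      ultimately show "free_op ar ?E X f xs \<in> K" using s0(2) by simp
    qed
  next
    show "models \<Sigma> K (free_op ar ?E X)" unfolding models_def satisfies_def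
    proof (clarify)
      fix u v and \<sigma> :: "nat \<Rightarrow> _"
      assume uv: "(u, v) \<in> \<Sigma>" and \<sigma>: "\<forall>n. \<sigma> n \<in> K"
      have wu: "wf_trm ar u" "wf_trm ar v" using uv S by auto
      define rep where "rep n = (SOME a. a \<in> \<sigma> n)" for n
      have rp: "rep n \<in> terms_over ar X \<and> \<sigma> n = free_rel ar ?E X `` {rep n} \<and> vars (rep n) = W" for n
      proof -
        have c1: "\<sigma> n \<in> free_carrier ar ?E X" "cvars (\<sigma> n) = W" using \<sigma> s0(2) W_def by auto
        from Aclass[OF R c1(1)] have "(SOME a. a \<in> \<sigma> n) \<in> terms_over ar X \<and> \<sigma> n = free_rel ar ?E X `` {SOME a. a \<in> \<sigma> n}" .
        then show ?thesis using c1(2) by (simp add: rep_def cvars_def)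
      qed
      have \<sigma>eq: "\<sigma> = (\<lambda>n. free_rel ar ?E X `` {rep n})" using rp by (intro ext) blast
      define m where "m = card W"
      have m1: "m \<ge> 1" using Wf Wne by (metis m_def card_0_eq less_one not_le)
      have cW: "card W = card {1..m}" by (simp add: m_def)
      obtain g where g: "bij_betw g W {1..m}" using finite_same_card_bij[OF Wf finite_atLeastAtMost cW] by blast
      define h where "h = inv_into W g"
      define r' where "r' n = subst (Var \<circ> g) (rep n)" for n
      define \<tau> where "\<tau> k = (if k \<in> {1..m} then Var (h k) else s0)" for k
      have r'T: "r' n \<in> T_m ar m" for n
      proof -
        have "vars (r' n) = g ` W" using rp[of n] by (auto simp: r'_def vars_subst)
        also have "\<dots> = {1..m}" using g by (simp add: bij_betw_def)
        finally show ?thesis using rp[of n] by (auto simp: T_m_def r'_def terms_over_def intro!: wf_subst)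
      qed
      have \<tau>T: "\<tau> k \<in> terms_over ar X" for k
      proof (cases "k \<in> {1..m}")
        case True
        then have "h k \<in> W" using g by (simp add: h_def bij_betw_def inv_into_into)
        then show ?thesis using True WX by (auto simp: \<tau>_def terms_over_def)
      qed (use s0 in \<open>auto simp: \<tau>_def\<close>)
      have \<tau>r: "subst \<tau> (r' n) = rep n" for n
      proof -
        have "subst \<tau> (r' n) = subst (\<lambda>x. \<tau> (g x)) (rep n)" by (simp add: r'_def subst_subst)
        also have "\<dots> = subst Var (rep n)"
        proof (rule subst_cong)
          show "\<forall>x\<in>vars (rep n). \<tau> (g x) = Var x"
          proof
            fix x assume "x \<in> vars (rep n)"
            then have x: "x \<in> W" using rp by auto
            then have "g x \<in> {1..m}" using g by (auto simp: bij_betw_def)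
            then show "\<tau> (g x) = Var x" using x g by (simp add: \<tau>_def h_def bij_betw_inv_into_left)
          qed
        qed
        finally show ?thesis by (simp add: subst_Var)
      qed
      have sub: "subst \<tau> (subst r' w) = subst rep w" for w
        by (simp add: subst_subst \<tau>r)
      have pr: "(subst r' u, subst r' v) \<in> ?E"
        unfolding prolong_def
        by (rule CollectI, rule exI[of _ u], rule exI[of _ v], rule exI[of _ r'], rule exI[of _ m])
           (use uv m1 r'T in simp)
      have "deriv ar ?E X (subst \<tau> (subst r' u)) (subst \<tau> (subst r' v))"
        by (rule deriv.ax[OF pr]) (use \<tau>T in auto)
      then have "(subst rep u, subst rep v) \<in> free_rel ar ?E X" by (simp add: sub free_rel_def)
      then have cl: "free_rel ar ?E X `` {subst rep u} = free_rel ar ?E X `` {subst rep v}"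
        using equiv_class_eq[OF eqFE[OF R, of X]] by blast
      have "eval (free_op ar ?E X) \<sigma> u = free_rel ar ?E X `` {subst rep u}"
        unfolding \<sigma>eq using rp by (intro eval_free[OF R wu(1)]) simp
      moreover have "eval (free_op ar ?E X) \<sigma> v = free_rel ar ?E X `` {subst rep v}"
        unfolding \<sigma>eq using rp by (intro eval_free[OF R wu(2)]) simp
      ultimately show "eval (free_op ar ?E X) \<sigma> (fst (u, v)) = eval (free_op ar ?E X) \<sigma> (snd (u, v))"
        using cl by simp
    qed
  qed
qed




theorem proposition3p2:
  fixes ar :: "'o \<Rightarrow> nat" and \<Sigma> :: "'o ident set" and X :: "'x set"
  assumes "plural ar"
    and "\<forall>(u, v) \<in> \<Sigma>. wf_trm ar u \<and> wf_trm ar v"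
  shows "\<exists>\<rho>. sl_replica ar (free_carrier ar (prolong ar \<Sigma>) X) (free_op ar (prolong ar \<Sigma>) X) \<rho>
           \<and> (\<exists>h. iso ar (free_carrier ar (prolong ar \<Sigma>) X // \<rho>)
                         (quot_op \<rho> (free_op ar (prolong ar \<Sigma>) X))
                         (free_carrier ar (regular_ids ar) X) (free_op ar (regular_ids ar) X) h)
           \<and> (\<forall>C \<in> free_carrier ar (prolong ar \<Sigma>) X // \<rho>.
                 in_Var ar \<Sigma> C (free_op ar (prolong ar \<Sigma>) X))
           \<and> in_V_circ_S ar \<Sigma> (free_carrier ar (prolong ar \<Sigma>) X) (free_op ar (prolong ar \<Sigma>) X)"
proof -
  have R: "regset ar (prolong ar \<Sigma>)" by (rule prolong_regset[OF assms])
  have V: "\<forall>C \<in> free_carrier ar (prolong ar \<Sigma>) X // rho ar (prolong ar \<Sigma>) X.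
                 in_Var ar \<Sigma> C (free_op ar (prolong ar \<Sigma>) X)"
    using classes_V[OF assms] by blast
  show ?thesis
  proof (intro exI conjI)
    show "sl_replica ar (free_carrier ar (prolong ar \<Sigma>) X) (free_op ar (prolong ar \<Sigma>) X) (rho ar (prolong ar \<Sigma>) X)"
      unfolding sl_replica_def using rho_cong[OF R] rho_S[OF R] rho_min[OF R] by blast
    show "iso ar (free_carrier ar (prolong ar \<Sigma>) X // rho ar (prolong ar \<Sigma>) X)
                         (quot_op (rho ar (prolong ar \<Sigma>) X) (free_op ar (prolong ar \<Sigma>) X))
                         (free_carrier ar (regular_ids ar) X) (free_op ar (regular_ids ar) X) Union"
      by (rule iso_rho[OF R])
    show "\<forall>C \<in> free_carrier ar (prolong ar \<Sigma>) X // rho ar (prolong ar \<Sigma>) X.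
                 in_Var ar \<Sigma> C (free_op ar (prolong ar \<Sigma>) X)" by (rule V)
    show "in_V_circ_S ar \<Sigma> (free_carrier ar (prolong ar \<Sigma>) X) (free_op ar (prolong ar \<Sigma>) X)"
      unfolding in_V_circ_S_def using rho_cong[OF R] rho_S[OF R] V by blast
  qed
qed



end
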